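(* Let $d\ge 1$ and $L_{2d}=2U\oplus 2E_8(-1)\oplus\langle -2d\rangle$. Let $r\in L_{2d}$ be a primitive vector such that the reflection $\sigma_r\colon l\mapsto l-\frac{2(l,r)}{(r,r)}r$ lies in $\mathrm O(L_{2d})$. Then $\sigma_r$ induces $\pm\mathrm{id}$ on the discriminant group $L_{2d}^\vee/L_{2d}$ if and only if either $r^2=\pm2$, or $r^2=\pm 2d$ and $\mathrm{div}(r)\in\{d,2d\}$.
   Context: $U$ is the hyperbolic plane, $E_8(-1)$ the negative definite $E_8$ lattice, $\langle -2d\rangle$ the rank one lattice with generator of square $-2d$. For $l\in L$, $\mathrm{div}(l)$ is the positive generator of the ideal $(l,L)\subset\mathbb Z$. *)

theory Defs
  imports Complex_Main
begin

text \<open>The lattice L_2d = 2U + 2E8(-1) + <-2d> of rank 21, realised on Z^21 with coordinates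
  0..20. Vectors of the rational hull L_2d (x) Q are functions nat => rat vanishing from index 21 on.
  Indices 0,1 and 2,3: two copies of U; 4..11 and 12..19: two copies of E8(-1);
  20: generator of square -2d.\<close>

definition e8_edge :: "nat \<Rightarrow> nat \<Rightarrow> bool" where
  "e8_edge i j \<longleftrightarrow> (i, j) \<in> {(0,1),(1,2),(2,3),(3,4),(4,5),(5,6),(4,7)}
                     \<or> (j, i) \<in> {(0,1),(1,2),(2,3),(3,4),(4,5),(5,6),(4,7)}"

text \<open>Gram matrix of E8(-1): negative of the E8 Cartan matrix (Dynkin diagram T_{2,3,5}).\<close>
definition e8m :: "nat \<Rightarrow> nat \<Rightarrow> int" where
  "e8m i j = (if i = j then -2 else if e8_edge i j then 1 else 0)"

definition gram :: "int \<Rightarrow> nat \<Rightarrow> nat \<Rightarrow> int" where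
  "gram d i j =
     (if i < 2 \<and> j < 2 then (if i \<noteq> j then 1 else 0)
      else if 2 \<le> i \<and> i < 4 \<and> 2 \<le> j \<and> j < 4 then (if i \<noteq> j then 1 else 0)
      else if 4 \<le> i \<and> i < 12 \<and> 4 \<le> j \<and> j < 12 then e8m (i - 4) (j - 4)
      else if 12 \<le> i \<and> i < 20 \<and> 12 \<le> j \<and> j < 20 then e8m (i - 12) (j - 12)
      else if i = 20 \<and> j = 20 then -2 * d
      else 0)"

definition bf :: "int \<Rightarrow> (nat \<Rightarrow> rat) \<Rightarrow> (nat \<Rightarrow> rat) \<Rightarrow> rat" where
  "bf d x y = (\<Sum>i<21. \<Sum>j<21. x i * of_int (gram d i j) * y j)"

definition QV :: "(nat \<Rightarrow> rat) set" where
  "QV = {x. \<forall>i\<ge>21. x i = 0}"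

definition Lat :: "(nat \<Rightarrow> rat) set" where
  "Lat = {x. (\<forall>i. x i \<in> \<int>) \<and> (\<forall>i\<ge>21. x i = 0)}"

definition dual_lat :: "int \<Rightarrow> (nat \<Rightarrow> rat) set" where
  "dual_lat d = {x \<in> QV. \<forall>l\<in>Lat. bf d x l \<in> \<int>}"

definition primitive :: "(nat \<Rightarrow> rat) \<Rightarrow> bool" where
  "primitive r \<longleftrightarrow> r \<in> Lat \<and>
     (\<forall>(k::int) y. y \<in> Lat \<longrightarrow> r = (\<lambda>i. of_int k * y i) \<longrightarrow> \<bar>k\<bar> = 1)"

definition reflection :: "int \<Rightarrow> (nat \<Rightarrow> rat) \<Rightarrow> (nat \<Rightarrow> rat) \<Rightarrow> (nat \<Rightarrow> rat)" where
  "reflection d r x = (\<lambda>i. x i - (2 * bf d x r / bf d r r) * r i)"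

definition in_O :: "int \<Rightarrow> ((nat \<Rightarrow> rat) \<Rightarrow> (nat \<Rightarrow> rat)) \<Rightarrow> bool" where
  "in_O d f \<longleftrightarrow> bij_betw f Lat Lat \<and> (\<forall>x\<in>Lat. \<forall>y\<in>Lat. bf d (f x) (f y) = bf d x y)"

definition induces_id :: "int \<Rightarrow> ((nat \<Rightarrow> rat) \<Rightarrow> (nat \<Rightarrow> rat)) \<Rightarrow> bool" where
  "induces_id d f \<longleftrightarrow> (\<forall>x\<in>dual_lat d. (\<lambda>i. f x i - x i) \<in> Lat)"

definition induces_minus_id :: "int \<Rightarrow> ((nat \<Rightarrow> rat) \<Rightarrow> (nat \<Rightarrow> rat)) \<Rightarrow> bool" where
  "induces_minus_id d f \<longleftrightarrow> (\<forall>x\<in>dual_lat d. (\<lambda>i. f x i + x i) \<in> Lat)"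

definition divisibility :: "int \<Rightarrow> (nat \<Rightarrow> rat) \<Rightarrow> int" where
  "divisibility d r = (THE k. k > 0 \<and>
      {bf d l r | l. l \<in> Lat} = {of_int (k * m) | m. True})"

end

theory Submission
  imports Defs
begin

definition e8inv :: "nat \<Rightarrow> nat \<Rightarrow> int" where
 "e8inv i j = [[-2, -3, -4, -5, -6, -4, -2, -3], [-3, -6, -8, -10, -12, -8, -4, -6], [-4, -8, -12, -15, -18, -12, -6, -9], [-5, -10, -15, -20, -24, -16, -8, -12], [-6, -12, -18, -24, -30, -20, -10, -15], [-4, -8, -12, -16, -20, -14, -7, -10], [-2, -4, -6, -8, -10, -7, -4, -5], [-3, -6, -9, -12, -15, -10, -5, -8]] ! i ! j"

definition Hm :: "nat \<Rightarrow> nat \<Rightarrow> int" where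
  "Hm i j =
     (if i < 2 \<and> j < 2 then (if i \<noteq> j then 1 else 0)
      else if 2 \<le> i \<and> i < 4 \<and> 2 \<le> j \<and> j < 4 then (if i \<noteq> j then 1 else 0)
      else if 4 \<le> i \<and> i < 12 \<and> 4 \<le> j \<and> j < 12 then e8inv (i - 4) (j - 4)
      else if 12 \<le> i \<and> i < 20 \<and> 12 \<le> j \<and> j < 20 then e8inv (i - 12) (j - 12)
      else 0)"

lemma Hm_code: "list_all (\<lambda>k. list_all (\<lambda>j. sum_list (map (\<lambda>i. Hm k i * gram 0 i j) [0..<20]) = (if j = k then 1 else 0)) [0..<21]) [0..<20]"
  by code_simp

lemma gram_d: "i < 20 \<Longrightarrow> gram d i j = gram 0 i j"
  unfolding gram_def by auto

lemma Hm_id: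
  assumes "k < 20" "j < 21"
  shows "(\<Sum>i<20. Hm k i * gram d i j) = (if j = k then 1 else 0)"
proof -
  have A: "\<forall>k\<in>set [0..<20]. \<forall>j\<in>set [0..<21]. sum_list (map (\<lambda>i. Hm k i * gram 0 i j) [0..<20]) = (if j = k then 1 else 0)"
    using Hm_code by (simp only: list_all_iff)
  have k: "k \<in> set [0..<20]" and j: "j \<in> set [0..<21]" using assms by (simp_all only: set_upt atLeastLessThan_iff) simp_all
  have "sum_list (map (\<lambda>i. Hm k i * gram 0 i j) [0..<20]) = (if j = k then 1 else 0)"
    using bspec[OF bspec[OF A k] j] .
  moreover have "sum_list (map (\<lambda>i. Hm k i * gram 0 i j) [0..<20]) = (\<Sum>i<20. Hm k i * gram d i j)"
    by (simp only: sum_set_upt_conv_sum_list_nat[symmetric] set_upt lessThan_atLeast0[symmetric]) (rule sum.cong, simp, simp add: gram_d[of _ d])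
  ultimately show ?thesis by metis
qed

definition unitv :: "nat \<Rightarrow> nat \<Rightarrow> rat" where "unitv k = (\<lambda>j. if j = k then 1 else 0)"
definition fv :: "nat \<Rightarrow> nat \<Rightarrow> rat" where "fv k = (\<lambda>i. if i < 20 then of_int (Hm k i) else 0)"

lemma e8_edge_sym: "e8_edge i j = e8_edge j i"
  unfolding e8_edge_def by (rule disj_commute)

lemma e8m_sym: "e8m i j = e8m j i"
  unfolding e8m_def by (simp only: e8_edge_sym eq_commute[of i j])

lemma gram_sym: "gram d i j = gram d j i"
proof -
  have "i<2 \<or> (2\<le>i\<and>i<4) \<or> (4\<le>i\<and>i<12) \<or> (12\<le>i\<and>i<20) \<or> i=20 \<or> i>20" by arith
  moreover have "j<2 \<or> (2\<le>j\<and>j<4) \<or> (4\<le>j\<and>j<12) \<or> (12\<le>j\<and>j<20) \<or> j=20 \<or> j>20" by arith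
  ultimately show ?thesis by (elim disjE) (simp_all add: gram_def e8m_sym eq_commute[of i j])
qed

lemma bf_sym: "bf d x y = bf d y x"
  unfolding bf_def by (subst sum.swap) (simp add: gram_sym mult_ac)

lemma bf_add1: "bf d (\<lambda>i. x i + y i) z = bf d x z + bf d y z"
  unfolding bf_def by (simp add: algebra_simps sum.distrib)
lemma bf_diff1: "bf d (\<lambda>i. x i - y i) z = bf d x z - bf d y z"
  unfolding bf_def by (simp add: algebra_simps sum_subtractf)
lemma bf_scale1: "bf d (\<lambda>i. c * x i) z = c * bf d x z"
  unfolding bf_def by (simp add: sum_distrib_left mult_ac)
lemma bf_add2: "bf d z (\<lambda>i. x i + y i) = bf d z x + bf d z y"
  using bf_add1 bf_sym by metis
lemma bf_diff2: "bf d z (\<lambda>i. x i - y i) = bf d z x - bf d z y"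
  using bf_diff1 bf_sym by metis
lemma bf_scale2: "bf d z (\<lambda>i. c * x i) = c * bf d z x"
  using bf_scale1 bf_sym by metis

lemma bf_row: "bf d x y = (\<Sum>j<21. (\<Sum>i<21. x i * of_int (gram d i j)) * y j)"
  unfolding bf_def by (subst sum.swap) (simp add: sum_distrib_right)

lemma gram_20: "gram d i 20 = (if i = 20 then -2*d else 0)"
  unfolding gram_def by auto

lemma lt21: "{..<21::nat} = insert 20 {..<20}" by auto

lemma bf_e20: "bf d x (unitv 20) = -2 * of_int d * x 20"
proof -
  have "bf d x (unitv 20) = (\<Sum>i<21. x i * of_int (gram d i 20))"
    unfolding bf_def unitv_def by (simp add: if_distrib cong: if_cong)
  also have "\<dots> = (\<Sum>i::nat<21. if i = 20 then x 20 * (-2 * of_int d) else 0)"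
    by (rule sum.cong) (auto simp: gram_20)
  finally show ?thesis by simp
qed

lemma bf_fv: assumes "k < 20" shows "bf d (fv k) y = y k"
proof -
  have "(\<Sum>i<21. fv k i * of_int (gram d i j)) = (if j = k then 1 else 0)" if "j < 21" for j
  proof -
    have "(\<Sum>i<21. fv k i * of_int (gram d i j)) = (\<Sum>i<20. fv k i * of_int (gram d i j))"
      unfolding lt21 by (simp add: fv_def)
    also have "\<dots> = of_int (\<Sum>i<20. Hm k i * gram d i j)"
      by (simp add: fv_def)
    finally show ?thesis using Hm_id[OF assms that] by simp
  qed
  then have "bf d (fv k) y = (\<Sum>j<21. (if j = k then 1 else 0) * y j)"
    unfolding bf_row by (intro sum.cong) auto
  also have "\<dots> = (\<Sum>j<21. if j = k then y k else 0)" by (rule sum.cong) auto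
  also have "\<dots> = y k" using assms by simp
  finally show ?thesis .
qed

lemma Lat_int: "x \<in> Lat \<Longrightarrow> x i = of_int \<lfloor>x i\<rfloor>"
  unfolding Lat_def by (auto elim!: Ints_cases)

lemma Lat_zero: "x \<in> Lat \<Longrightarrow> i \<ge> 21 \<Longrightarrow> x i = 0"
  unfolding Lat_def by auto

lemma Lat_Ints: "x \<in> Lat \<Longrightarrow> x i \<in> \<int>"
  unfolding Lat_def by auto

lemma LatI: "(\<And>i. x i \<in> \<int>) \<Longrightarrow> (\<And>i. i \<ge> 21 \<Longrightarrow> x i = 0) \<Longrightarrow> x \<in> Lat"
  unfolding Lat_def by auto

lemma Lat_diff: "x \<in> Lat \<Longrightarrow> y \<in> Lat \<Longrightarrow> (\<lambda>i. x i - y i) \<in> Lat"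
  unfolding Lat_def by auto
lemma Lat_add: "x \<in> Lat \<Longrightarrow> y \<in> Lat \<Longrightarrow> (\<lambda>i. x i + y i) \<in> Lat"
  unfolding Lat_def by auto
lemma Lat_scale: "x \<in> Lat \<Longrightarrow> c \<in> \<int> \<Longrightarrow> (\<lambda>i. c * x i) \<in> Lat"
  unfolding Lat_def by auto

lemma bf_Ints: "x \<in> Lat \<Longrightarrow> y \<in> Lat \<Longrightarrow> bf d x y \<in> \<int>"
  unfolding bf_def by (intro Ints_sum Ints_mult Ints_of_int Lat_Ints)

lemma unitv_Lat: "unitv 20 \<in> Lat"
  unfolding unitv_def by (rule LatI) auto

lemma fv_Lat: "fv k \<in> Lat"
  unfolding fv_def by (rule LatI) auto

lemma even_quad:
  fixes g :: "nat \<Rightarrow> nat \<Rightarrow> int" and X :: "nat \<Rightarrow> int"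
  assumes sym: "\<And>i j. g i j = g j i" and ev: "\<And>i. even (g i i)"
  shows "even (\<Sum>i<n. \<Sum>j<n. X i * g i j * X j)"
proof (induction n)
  case 0 then show ?case by simp
next
  case (Suc n)
  have "(\<Sum>i<Suc n. \<Sum>j<Suc n. X i * g i j * X j) =
     (\<Sum>i<n. \<Sum>j<n. X i * g i j * X j) + (\<Sum>i<n. X i * g i n * X n) + (\<Sum>j<n. X n * g n j * X j) + X n * g n n * X n"
    by (simp add: sum.distrib)
  also have "(\<Sum>i<n. X i * g i n * X n) = (\<Sum>j<n. X n * g n j * X j)"
    by (rule sum.cong) (auto simp: sym[of _ n] mult_ac)
  finally have "(\<Sum>i<Suc n. \<Sum>j<Suc n. X i * g i j * X j) =
     (\<Sum>i<n. \<Sum>j<n. X i * g i j * X j) + 2 * (\<Sum>j<n. X n * g n j * X j) + X n * g n n * X n"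
    by simp
  moreover have "even (X n * g n n * X n)" using ev[of n] by simp
  ultimately show ?case using Suc.IH by simp
qed

lemma bf_even: assumes "x \<in> Lat" shows "\<exists>z. bf d x x = 2 * of_int z"
proof -
  define X where "X i = \<lfloor>x i\<rfloor>" for i
  have xX: "x i = of_int (X i)" for i using Lat_int[OF assms] X_def by simp
  define S where "S = (\<Sum>i<21. \<Sum>j<21. X i * gram d i j * X j)"
  have h1: "bf d x x = of_int S"
    unfolding bf_def xX S_def by simp
  have "even S" unfolding S_def
    by (rule even_quad) (auto simp: gram_sym gram_def e8m_def)
  then obtain b where "S = 2 * b" by (elim evenE)
  with h1 have "bf d x x = 2 * of_int b" by simp
  then show ?thesis by blast
qed

lemma Ints_div_dvd:
  assumes "(of_int a / of_int b :: rat) \<in> \<int>" "b \<noteq> 0"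
  shows "b dvd a"
proof -
  obtain z where "(of_int a / of_int b :: rat) = of_int z" using assms(1) by (auto elim!: Ints_cases)
  then have "(of_int a :: rat) = of_int (z * b)" using assms(2) by (simp add: field_simps)
  then have "a = z * b" by linarith
  then show ?thesis by simp
qed

lemma prim_div:
  assumes "primitive r" "r = (\<lambda>i. of_int (R i))" "\<And>i. m dvd R i"
  shows "\<bar>m\<bar> = 1"
proof -
  have rL: "r \<in> Lat" using assms(1) unfolding primitive_def by simp
  define y where "y = (\<lambda>i. (of_int (R i div m) :: rat))"
  have "y \<in> Lat"
  proof (rule LatI)
    fix i show "y i \<in> \<int>" unfolding y_def by simp
  next
    fix i :: nat assume "i \<ge> 21"
    then have "r i = 0" using Lat_zero[OF rL] by simp
    then have "R i = 0" using assms(2) by (metis of_int_eq_0_iff)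
    then show "y i = 0" unfolding y_def by simp
  qed
  moreover have "r = (\<lambda>i. of_int m * y i)"
  proof
    fix i
    have "of_int m * y i = (of_int (m * (R i div m)) :: rat)" unfolding y_def by simp
    also have "m * (R i div m) = R i" using assms(3)[of i] by simp
    finally show "r i = of_int m * y i" using assms(2) by simp
  qed
  ultimately show ?thesis using assms(1) unfolding primitive_def by blast
qed

lemma prim_scale:
  assumes "primitive r" "(\<lambda>i. c * r i) \<in> Lat"
  shows "c \<in> \<int>"
proof -
  have rL: "r \<in> Lat" using assms(1) unfolding primitive_def by simp
  define R where "R i = \<lfloor>r i\<rfloor>" for i
  have rR: "r = (\<lambda>i. of_int (R i))" using Lat_int[OF rL] R_def by auto
  obtain p q where pq: "quotient_of c = (p, q)" by (cases "quotient_of c")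
  have q0: "q > 0" using quotient_of_denom_pos[OF pq] .
  have cop: "coprime p q" using quotient_of_coprime[OF pq] .
  have c: "c = of_int p / of_int q" using quotient_of_div[OF pq] .
  have "q dvd R i" for i
  proof -
    have "c * r i \<in> \<int>" using Lat_Ints[OF assms(2)] by simp
    then have "(of_int (p * R i) / of_int q :: rat) \<in> \<int>" using c rR by simp
    then have "q dvd p * R i" using q0 by (intro Ints_div_dvd) auto
    then show ?thesis using cop by (metis coprime_commute coprime_dvd_mult_right_iff)
  qed
  then have "\<bar>q\<bar> = 1" using prim_div[OF assms(1) rR] by blast
  then have "q = 1" using q0 by simp
  then show ?thesis using c by simp
qed

lemma div_exists:
  assumes rL: "r \<in> Lat" and nz: "bf d r r \<noteq> 0"
  shows "\<exists>k>0. {bf d l r | l. l \<in> Lat} = {of_int (k * m) | m. True}"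
proof -
  define T where "T = {z::int. \<exists>l\<in>Lat. bf d l r = of_int z}"
  have Tdiff: "z1 - z2 \<in> T" if h: "z1 \<in> T" "z2 \<in> T" for z1 z2
  proof -
    obtain l1 l2 where "l1 \<in> Lat" "l2 \<in> Lat" "bf d l1 r = of_int z1" "bf d l2 r = of_int z2"
      using h unfolding T_def by blast
    then show ?thesis unfolding T_def
      by (intro CollectI bexI[of _ "\<lambda>i. l1 i - l2 i"]) (auto simp: bf_diff1 Lat_diff)
  qed
  have Tmult: "m * z \<in> T" if h: "z \<in> T" for m z
  proof -
    obtain l where "l \<in> Lat" "bf d l r = of_int z"
      using h unfolding T_def by auto
    then show ?thesis unfolding T_def
      by (intro CollectI bexI[of _ "\<lambda>i. of_int m * l i"]) (auto simp: bf_scale1 Lat_scale)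
  qed
  obtain N where N: "bf d r r = of_int N" using bf_Ints[OF rL rL] by (auto elim!: Ints_cases)
  have "N \<in> T" unfolding T_def using rL N by auto
  then have "sgn N * N \<in> T" by (rule Tmult)
  moreover have "sgn N * N > 0" using N nz by (auto simp: sgn_if)
  ultimately have exP: "\<exists>k::nat. k > 0 \<and> int k \<in> T"
    by (intro exI[of _ "nat (sgn N * N)"]) auto
  define k0 where "k0 = (LEAST k::nat. k > 0 \<and> int k \<in> T)"
  have k0: "k0 > 0 \<and> int k0 \<in> T" unfolding k0_def using LeastI_ex[OF exP] .
  have dv: "int k0 dvd z" if "z \<in> T" for z
  proof (rule ccontr)
    assume nd: "\<not> int k0 dvd z"
    have "z - (z div int k0) * int k0 \<in> T" using Tdiff[OF that Tmult[OF conjunct2[OF k0]]] .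
    then have mT: "z mod int k0 \<in> T" by (simp add: minus_div_mult_eq_mod)
    have pos: "z mod int k0 > 0" using nd k0
      by (metis dvd_eq_mod_eq_0 le_less of_nat_0_less_iff pos_mod_sign)
    have lt: "z mod int k0 < int k0" using k0 by simp
    have "nat (z mod int k0) > 0 \<and> int (nat (z mod int k0)) \<in> T" using pos mT by simp
    then have "k0 \<le> nat (z mod int k0)" unfolding k0_def by (rule Least_le)
    then show False using lt pos by linarith
  qed
  have "{bf d l r | l. l \<in> Lat} = {of_int (int k0 * m) | m. True}"
  proof (intro set_eqI iffI)
    fix s assume "s \<in> {bf d l r | l. l \<in> Lat}"
    then obtain l where l: "l \<in> Lat" "s = bf d l r" by auto
    then obtain z where z: "s = of_int z" using bf_Ints[OF l(1) rL] by (auto elim!: Ints_cases)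
    then have "z \<in> T" unfolding T_def using l by auto
    then obtain m where "z = int k0 * m" using dv by (auto elim!: dvdE)
    then show "s \<in> {of_int (int k0 * m) | m. True}" using z by auto
  next
    fix s :: rat assume "s \<in> {of_int (int k0 * m) | m. True}"
    then obtain m where m: "s = of_int (int k0 * m)" by auto
    have "m * int k0 \<in> T" using Tmult k0 by blast
    then obtain l where "l \<in> Lat" "bf d l r = of_int (m * int k0)" unfolding T_def by blast
    then show "s \<in> {bf d l r | l. l \<in> Lat}" using m by (metis (mono_tags, lifting) mem_Collect_eq mult.commute)
  qed
  then show ?thesis using k0 by (intro exI[of _ "int k0"]) auto
qed

lemma div_prop:
  assumes rL: "r \<in> Lat" and nz: "bf d r r \<noteq> 0"
  shows "divisibility d r > 0 \<and> {bf d l r | l. l \<in> Lat} = {of_int (divisibility d r * m) | m. True}"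
proof -
  let ?S = "{bf d l r | l. l \<in> Lat}"
  have uq: "k1 = k2" if "k1 > 0" "?S = {of_int (k1 * m) | m. True}" "k2 > 0" "?S = {of_int (k2 * m) | m. True}" for k1 k2
  proof -
    have "(of_int k1 :: rat) \<in> {of_int (k2 * m) | m. True}" using that by (metis (mono_tags, lifting) mem_Collect_eq mult.right_neutral)
    then obtain m1 where "(of_int k1 :: rat) = of_int (k2 * m1)" by auto
    then have a: "k2 dvd k1" by (metis dvd_triv_left of_int_eq_iff)
    have "(of_int k2 :: rat) \<in> {of_int (k1 * m) | m. True}" using that by (metis (mono_tags, lifting) mem_Collect_eq mult.right_neutral)
    then obtain m2 where "(of_int k2 :: rat) = of_int (k1 * m2)" by auto
    then have b: "k1 dvd k2" by (metis dvd_triv_left of_int_eq_iff)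
    show ?thesis using a b that by (simp add: zdvd_antisym_nonneg)
  qed
  have "\<exists>!k. k > 0 \<and> ?S = {of_int (k * m) | m. True}"
    using div_exists[OF rL nz] uq by blast
  then show ?thesis unfolding divisibility_def by (rule theI')
qed

lemma decomp:
  assumes rL: "r \<in> Lat" and rR: "r = (\<lambda>i. of_int (R i))" and e0: "e \<noteq> 0"
    and dv: "\<And>i. i < 20 \<Longrightarrow> e dvd R i"
  shows "\<exists>w\<in>Lat. w 20 = 0 \<and> (\<forall>i<20. r i = of_int e * w i) \<and> (\<forall>y. bf d y r = of_int e * bf d y w - 2 * of_int d * of_int (R 20) * y 20)
     \<and> bf d r r = of_int e ^ 2 * bf d w w - 2 * of_int d * of_int (R 20) ^ 2"
proof -
  define w where "w = (\<lambda>i. if i < 20 then (of_int (R i div e) :: rat) else 0)"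
  have wL: "w \<in> Lat" unfolding w_def by (rule LatI) auto
  have w20: "w 20 = 0" unfolding w_def by simp
  have req: "r = (\<lambda>i. of_int e * w i + of_int (R 20) * unitv 20 i)"
  proof
    fix i :: nat
    consider "i < 20" | "i = 20" | "i > 20" by linarith
    then show "r i = of_int e * w i + of_int (R 20) * unitv 20 i"
    proof cases
      case 1
      have "of_int e * w i = (of_int (e * (R i div e)) :: rat)" using 1 unfolding w_def by simp
      also have "e * (R i div e) = R i" using dv[OF 1] by simp
      finally show ?thesis using 1 rR unfolding unitv_def by simp
    next
      case 2 then show ?thesis using rR unfolding unitv_def w_def by simp
    next
      case 3 then show ?thesis using Lat_zero[OF rL, of i] unfolding unitv_def w_def by simp
    qed
  qed
  have by_: "bf d y r = of_int e * bf d y w - 2 * of_int d * of_int (R 20) * y 20" for y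
  proof -
    have "bf d y r = bf d y (\<lambda>i. of_int e * w i + of_int (R 20) * unitv 20 i)" using req by simp
    also have "\<dots> = of_int e * bf d y w + of_int (R 20) * bf d y (unitv 20)"
      by (simp add: bf_add2 bf_scale2)
    finally show ?thesis by (simp add: bf_e20)
  qed
  have "bf d r r = of_int e * bf d r w - 2 * of_int d * of_int (R 20) * r 20" by (rule by_)
  also have "bf d r w = of_int e * bf d w w" using by_[of w] w20 bf_sym[of d r w] by simp
  finally have "bf d r r = of_int e ^ 2 * bf d w w - 2 * of_int d * of_int (R 20) ^ 2"
    using rR by (simp add: power2_eq_square)
  moreover have "\<forall>i<20. r i = of_int e * w i" using req unfolding unitv_def by auto
  ultimately show ?thesis using wL w20 by_ by blast
qed

lemma dvd_all:
  assumes rL: "r \<in> Lat" and rR: "r = (\<lambda>i. of_int (R i))" and e0: "d \<noteq> 0"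
    and dv: "\<And>i. i < 20 \<Longrightarrow> d dvd R i" and lL: "l \<in> Lat" and s: "bf d l r = of_int s"
  shows "d dvd s"
proof -
  obtain w where wL: "w \<in> Lat" and f: "\<forall>y. bf d y r = of_int d * bf d y w - 2 * of_int d * of_int (R 20) * y 20"
    using decomp[OF rL rR e0 dv] by blast
  have "bf d l r = of_int d * (bf d l w - 2 * of_int (R 20) * l 20)" using f by (simp add: algebra_simps)
  moreover have "bf d l w - 2 * of_int (R 20) * l 20 \<in> \<int>" using bf_Ints[OF lL wL] Lat_Ints[OF lL] by simp
  ultimately obtain z where "bf d l r = of_int d * of_int z" by (auto elim!: Ints_cases)
  then have "s = d * z" using s by (metis of_int_eq_iff of_int_mult)
  then show ?thesis by simp
qed

theorem corollary4p4:
  fixes d :: int and r :: "nat \<Rightarrow> rat"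
  assumes "d \<ge> 1"
    and "primitive r"
    and "bf d r r \<noteq> 0"
    and "in_O d (reflection d r)"
  shows "(induces_id d (reflection d r) \<or> induces_minus_id d (reflection d r)) \<longleftrightarrow>
           (bf d r r = 2 \<or> bf d r r = -2 \<or>
            ((bf d r r = of_int (2 * d) \<or> bf d r r = of_int (-2 * d)) \<and>
             divisibility d r \<in> {d, 2 * d}))"
proof -
  have d1: "d \<ge> 1" using assms(1) .
  have d0: "d \<noteq> 0" using d1 by simp
  have prim: "primitive r" using assms(2) .
  have rL: "r \<in> Lat" using prim unfolding primitive_def by simp
  define R where "R i = \<lfloor>r i\<rfloor>" for i
  have rR: "r = (\<lambda>i. of_int (R i))" using Lat_int[OF rL] R_def by auto
  define a where "a = R 20"
  have ra: "r 20 = of_int a" using rR a_def by simp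
  obtain N where N: "bf d r r = of_int N" using bf_Ints[OF rL rL] by (auto elim!: Ints_cases)
  have N0: "N \<noteq> 0" using N assms(3) by simp
  obtain h where h: "N = 2 * h"
  proof -
    obtain z where "bf d r r = 2 * of_int z" using bf_even[OF rL] by blast
    then have "N = 2 * z" using N by (metis of_int_eq_iff of_int_mult of_int_numeral)
    then show ?thesis using that by blast
  qed
  define K where "K = divisibility d r"
  have Kp: "K > 0" and KS: "{bf d l r | l. l \<in> Lat} = {of_int (K * m) | m. True}"
    using div_prop[OF rL assms(3)] K_def by auto
  have KO: "N dvd 2 * s" if l: "l \<in> Lat" "bf d l r = of_int s" for l s
  proof -
    have "reflection d r l \<in> Lat" using assms(4) l(1) unfolding in_O_def bij_betw_def by auto
    then have "(\<lambda>i. reflection d r l i - l i) \<in> Lat" using Lat_diff l(1) by blast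
    moreover have "(\<lambda>i. reflection d r l i - l i) = (\<lambda>i. (-(2 * bf d l r / bf d r r)) * r i)"
      unfolding reflection_def by auto
    ultimately have "(\<lambda>i. (-(2 * bf d l r / bf d r r)) * r i) \<in> Lat" by metis
    from prim_scale[OF prim this] have "-(2 * bf d l r / bf d r r) \<in> \<int>" .
    then have "(of_int (2 * s) / of_int N :: rat) \<in> \<int>" using l(2) N by simp
    then show ?thesis using Ints_div_dvd N0 by blast
  qed
  have bfv: "bf d (fv k) r = of_int (R k)" if "k < 20" for k
    using bf_fv[OF that] rR by simp
  have bu: "bf d (unitv 20) r = of_int (-2 * d * a)"
    using bf_e20[of d r] bf_sym[of d r "unitv 20"] ra by simp
  have KdvS: "K dvd s" if l: "l \<in> Lat" "bf d l r = of_int s" for l s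
  proof -
    have "bf d l r \<in> {of_int (K * m) | m. True}" using KS l(1) by blast
    then obtain m where "(of_int s :: rat) = of_int (K * m)" using l(2) by auto
    then have "s = K * m" by (metis of_int_eq_iff)
    then show ?thesis by simp
  qed
  obtain lK where lK: "lK \<in> Lat" "bf d lK r = of_int K"
  proof -
    have "(of_int (K * 1) :: rat) \<in> {of_int (K * m) | m. True}" by blast
    then have "(of_int K :: rat) \<in> {bf d l r | l. l \<in> Lat}" using KS by simp
    then show ?thesis using that by auto
  qed
  have KdvR: "K dvd R k" if "k < 20" for k using KdvS[OF fv_Lat bfv[OF that]] .
  have Kdva: "K dvd 2 * d * a" using KdvS[OF unitv_Lat bu] by simp
  have KdvN: "K dvd N" using KdvS[OF rL N] .
  have NdvK: "N dvd 2 * K" using KO[OF lK] .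
  have Rbig: "R i = 0" if "i \<ge> 21" for i using Lat_zero[OF rL that] rR by (metis of_int_eq_0_iff)
  have primdiv: "\<bar>m\<bar> = 1" if "\<And>k. k < 20 \<Longrightarrow> m dvd R k" "m dvd a" for m
  proof (rule prim_div[OF prim rR])
    fix i :: nat
    consider "i < 20" | "i = 20" | "i \<ge> 21" by linarith
    then show "m dvd R i" using that a_def Rbig by cases auto
  qed
  define xs where "xs = (\<lambda>i. (1 / (2 * of_int d)) * unitv 20 i)"
  have bxs: "bf d xs y = - y 20" for y
  proof -
    have "bf d xs y = (1 / (2 * of_int d)) * bf d y (unitv 20)" unfolding xs_def bf_scale1 by (simp add: bf_sym[of d "unitv 20"])
    then show ?thesis using d0 by (simp add: bf_e20)
  qed
  have xs_dual: "xs \<in> dual_lat d"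
    unfolding dual_lat_def QV_def
  proof (intro CollectI conjI allI impI ballI)
    fix i :: nat assume "21 \<le> i" then show "xs i = 0" unfolding xs_def unitv_def by simp
  next
    fix l assume "l \<in> Lat" then show "bf d xs l \<in> \<int>" using bxs Lat_Ints by simp
  qed
  have bxr: "bf d xs r = - of_int a" using bxs ra by simp
  show ?thesis
  proof
    assume L: "induces_id d (reflection d r) \<or> induces_minus_id d (reflection d r)"
    then show "bf d r r = 2 \<or> bf d r r = -2 \<or>
            ((bf d r r = of_int (2 * d) \<or> bf d r r = of_int (-2 * d)) \<and>
             divisibility d r \<in> {d, 2 * d})"
    proof
      assume "induces_id d (reflection d r)"
      then have "(\<lambda>i. reflection d r xs i - xs i) \<in> Lat" using xs_dual unfolding induces_id_def by blast
      moreover have "(\<lambda>i. reflection d r xs i - xs i) = (\<lambda>i. (of_int (2 * a) / of_int N) * r i)"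
        using bxr N unfolding reflection_def by auto
      ultimately have "(\<lambda>i. (of_int (2 * a) / of_int N) * r i) \<in> Lat" by metis
      from prim_scale[OF prim this] have "N dvd 2 * a" using Ints_div_dvd N0 by blast
      then have ha: "h dvd a" using h by simp
      have "h dvd R k" if "k < 20" for k
      proof -
        have "N dvd 2 * R k" using KO[OF fv_Lat bfv[OF that]] .
        then show ?thesis using h by simp
      qed
      then have "\<bar>h\<bar> = 1" using primdiv ha by blast
      then have "N = 2 \<or> N = -2" using h by auto
      then show ?thesis using N by auto
    next
      assume "induces_minus_id d (reflection d r)"
      then have Lm: "(\<lambda>i. reflection d r xs i + xs i) \<in> Lat" using xs_dual unfolding induces_minus_id_def by blast
      define c where "c = (of_int (2 * a) / of_int N :: rat)"
      have eqm: "(\<lambda>i. reflection d r xs i + xs i) = (\<lambda>i. 2 * xs i + c * r i)"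
        using bxr N unfolding reflection_def c_def by auto
      have Lm2: "(\<lambda>i. 2 * xs i + c * r i) \<in> Lat" using Lm eqm by metis
      have ci: "c * r k \<in> \<int>" if "k < 20" for k
        using Lat_Ints[OF Lm2, of k] that unfolding xs_def unitv_def by simp
      have c20: "1 / of_int d + c * of_int a \<in> \<int>"
        using Lat_Ints[OF Lm2, of 20] ra d0 unfolding xs_def unitv_def by simp
      have dcL: "(\<lambda>i. (of_int d * c) * r i) \<in> Lat"
      proof (rule LatI)
        fix i :: nat
        consider "i < 20" | "i = 20" | "i \<ge> 21" by linarith
        then show "of_int d * c * r i \<in> \<int>"
        proof cases
          case 1 then show ?thesis using ci[OF 1] by (simp add: mult.assoc)
        next
          case 2
          have "of_int d * c * r i = of_int d * (1 / of_int d + c * of_int a) - 1"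
            using 2 ra d0 by (simp add: field_simps)
          then show ?thesis using c20 by simp
        next
          case 3 then show ?thesis using Lat_zero[OF rL 3] by simp
        qed
      next
        fix i :: nat assume "i \<ge> 21" then show "of_int d * c * r i = 0" using Lat_zero[OF rL] by simp
      qed
      obtain p where p: "of_int d * c = of_int p" using prim_scale[OF prim dcL] by (auto elim!: Ints_cases)
      have cp: "c = of_int p / of_int d" using p d0 by (simp add: field_simps)
      have "(of_int (p * N) :: rat) = of_int (2 * a * d)"
        using p N0 d0 unfolding c_def by (simp add: field_simps)
      then have pN: "p * N = 2 * a * d" by (metis of_int_eq_iff)
      have "1 / of_int d + c * of_int a = (of_int (p * a + 1) / of_int d :: rat)"
        using cp d0 by (simp add: field_simps)
      then have dpa: "d dvd p * a + 1" using c20 Ints_div_dvd d0 by metis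
      have copd: "coprime d p"
      proof (rule coprimeI)
        fix g assume g: "g dvd d" "g dvd p"
        then have "g dvd p * a + 1" "g dvd p * a" using dpa by auto
        then have "g dvd 1" by (metis dvd_add_right_iff)
        then show "is_unit g" by simp
      qed
      have dR: "d dvd R k" if "k < 20" for k
      proof -
        have "c * r k = (of_int (p * R k) / of_int d :: rat)" using cp rR by simp
        then have "d dvd p * R k" using ci[OF that] Ints_div_dvd d0 by metis
        then show ?thesis using copd by (metis coprime_dvd_mult_right_iff)
      qed
      have dK: "d dvd K" using dvd_all[OF rL rR d0 dR lK] .
      have copKa: "coprime K a"
      proof (rule coprimeI)
        fix g assume g: "g dvd K" "g dvd a"
        have "g dvd R k" if "k < 20" for k using g(1) KdvR[OF that] by (rule dvd_trans)
        then have "\<bar>g\<bar> = 1" using primdiv g(2) by blast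
        then show "is_unit g" by simp
      qed
      have K2d: "K dvd 2 * d" using Kdva copKa by (metis coprime_dvd_mult_left_iff)
      have Kc: "K = d \<or> K = 2 * d"
      proof -
        obtain t where t: "K = d * t" using dK by (elim dvdE)
        have tp: "t > 0" using t Kp d1 by (metis pos_zmult_eq_1_iff_lemma zero_less_mult_pos linorder_not_le order.strict_trans2 zero_less_one)
        have "d * t dvd d * 2" using K2d t by (simp add: mult.commute)
        then have "t dvd 2" using d0 by simp
        then have "t \<le> 2" by (rule zdvd_imp_le) simp
        then have "t = 1 \<or> t = 2" using tp by linarith
        then show ?thesis using t by auto
      qed
      have Nc: "N = K \<or> N = -K \<or> N = 2 * K \<or> N = -2 * K"
      proof -
        obtain u where u: "N = K * u" using KdvN by (elim dvdE)
        have "K * u dvd K * 2" using NdvK u by (simp add: mult.commute)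
        then have "u dvd 2" using Kp by simp
        then have "\<bar>u\<bar> dvd 2" by simp
        then have "\<bar>u\<bar> \<le> 2" by (rule zdvd_imp_le) simp
        moreover have "u \<noteq> 0" using u N0 by auto
        ultimately have "u = 1 \<or> u = -1 \<or> u = 2 \<or> u = -2" by linarith
        then show ?thesis using u by auto
      qed
      have n1: "N \<noteq> d \<and> N \<noteq> -d"
      proof (rule ccontr)
        assume "\<not> (N \<noteq> d \<and> N \<noteq> -d)"
        then have "N = d \<or> N = -d" by blast
        then have "p * d = (2 * a) * d \<or> p * d = (- 2 * a) * d" using pN by auto
        then have "p = 2 * a \<or> p = -2 * a" using d0 by (metis mult_right_cancel)
        then have ep: "even p" by auto
        have "d = 2 * h \<or> d = 2 * (-h)" using h \<open>N = d \<or> N = -d\<close> by auto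
        then have "even d" by (metis dvd_triv_left)
        then have "even (p * a + 1)" using dpa by (metis dvd_trans)
        then show False using ep by simp
      qed
      have n4: "N \<noteq> 4 * d \<and> N \<noteq> -4 * d"
      proof (rule ccontr)
        assume "\<not> (N \<noteq> 4 * d \<and> N \<noteq> -4 * d)"
        then have N4: "N = 4 * d \<or> N = -4 * d" by blast
        then have K2: "K = 2 * d" using Kc Nc d1 by auto
        have "p * (4 * d) = 2 * a * d \<or> p * (4 * d) = - 2 * a * d" using pN N4 by auto
        then have "d * (2 * p) = d * a \<or> d * (2 * p) = d * (- a)" by (auto simp: algebra_simps)
        then have "2 * p = a \<or> 2 * p = - a" using d0 by (metis mult_left_cancel)
        then have ap: "a = 2 * p \<or> a = - 2 * p" by auto
        have e0: "2 * d \<noteq> 0" using d0 by simp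
        have dR2: "2 * d dvd R k" if "k < 20" for k using KdvR[OF that] K2 by simp
        obtain w where wL: "w \<in> Lat" and bw: "bf d r r = of_int (2 * d) ^ 2 * bf d w w - 2 * of_int d * of_int (R 20) ^ 2"
          using decomp[OF rL rR e0 dR2] by blast
        obtain q where q: "bf d w w = 2 * of_int q" using bf_even[OF wL] by blast
        have "(of_int N :: rat) = of_int (8 * d^2 * q - 2 * d * a^2)" using bw q N a_def by simp
        then have "N = 8 * d^2 * q - 2 * d * a^2" by (metis of_int_eq_iff)
        then have "N = 8 * d^2 * q - 8 * d * p^2" using ap by (auto simp: power2_eq_square)
        then have "4 * d * 1 = 4 * d * (2 * d * q - 2 * p^2) \<or> 4 * d * (- 1) = 4 * d * (2 * d * q - 2 * p^2)"
          using N4 by (auto simp: algebra_simps power2_eq_square)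
        then have "1 = 2 * d * q - 2 * p^2 \<or> -1 = 2 * d * q - 2 * p^2" using d0 by (metis mult_cancel_left mult_eq_0_iff zero_neq_numeral)
        then have "1 = 2 * (d * q - p^2) \<or> -1 = 2 * (d * q - p^2)" by (simp add: algebra_simps)
        moreover have "\<And>X::int. 1 = 2 * X \<or> -1 = 2 * X \<Longrightarrow> False" by presburger
        ultimately show False by blast
      qed
      have "N = 2 * d \<or> N = -2 * d" using Nc Kc n1 n4 by auto
      then show ?thesis using N Kc K_def by auto
    qed
  next
    assume "bf d r r = 2 \<or> bf d r r = -2 \<or>
            ((bf d r r = of_int (2 * d) \<or> bf d r r = of_int (-2 * d)) \<and>
             divisibility d r \<in> {d, 2 * d})"
    note H = this
    show "induces_id d (reflection d r) \<or> induces_minus_id d (reflection d r)"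
    proof (cases "N = 2 \<or> N = -2")
      case True
      have "induces_id d (reflection d r)" unfolding induces_id_def
      proof
        fix x assume x: "x \<in> dual_lat d"
        have bx: "bf d x r \<in> \<int>" using x rL unfolding dual_lat_def by blast
        have "(\<lambda>i. reflection d r x i - x i) = (\<lambda>i. (-(2 * bf d x r / bf d r r)) * r i)"
          unfolding reflection_def by auto
        moreover have "-(2 * bf d x r / bf d r r) \<in> \<int>" using True N bx by auto
        ultimately show "(\<lambda>i. reflection d r x i - x i) \<in> Lat" using Lat_scale[OF rL] by metis
      qed
      then show ?thesis ..
    next
      case False
      have "N \<noteq> 2" "N \<noteq> -2" using False by auto
      then have "bf d r r \<noteq> 2" "bf d r r \<noteq> -2" using N by (metis of_int_eq_iff of_int_numeral of_int_minus)+
      then have HN: "(N = 2 * d \<or> N = -2 * d) \<and> (K = d \<or> K = 2 * d)"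
        using H N K_def by (auto simp del: of_int_mult simp add: of_int_eq_iff)
      then obtain sg where sg: "N = 2 * d * sg" "sg = 1 \<or> sg = -1" by (metis mult.right_neutral mult_minus_right mult_minus_left)
      have dK: "d dvd K" using HN by auto
      have dR: "d dvd R k" if "k < 20" for k using dK KdvR[OF that] by (rule dvd_trans)
      obtain w where wL: "w \<in> Lat" and w20: "w 20 = 0" and rw: "\<forall>i<20. r i = of_int d * w i"
        and by_: "\<forall>y. bf d y r = of_int d * bf d y w - 2 * of_int d * of_int (R 20) * y 20"
        and bw: "bf d r r = of_int d ^ 2 * bf d w w - 2 * of_int d * of_int (R 20) ^ 2"
        using decomp[OF rL rR d0 dR] by blast
      obtain q where q: "bf d w w = 2 * of_int q" using bf_even[OF wL] by blast
      have "(of_int N :: rat) = of_int (2 * d^2 * q - 2 * d * a^2)" using bw q N a_def by simp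
      then have "N = 2 * d^2 * q - 2 * d * a^2" by (metis of_int_eq_iff)
      then have "(2 * d) * sg = (2 * d) * (d * q - a^2)" using sg(1) by (simp add: algebra_simps power2_eq_square)
      then have sgq: "sg = d * q - a^2" using d0 by (metis mult_left_cancel mult_eq_0_iff zero_neq_numeral)
      have "induces_minus_id d (reflection d r)" unfolding induces_minus_id_def
      proof
        fix x assume x: "x \<in> dual_lat d"
        have xd: "\<And>l. l \<in> Lat \<Longrightarrow> bf d x l \<in> \<int>" and xQ: "\<And>i. i \<ge> 21 \<Longrightarrow> x i = 0"
          using x unfolding dual_lat_def QV_def by auto
        define B where "B = bf d x w"
        have B: "B \<in> \<int>" unfolding B_def using xd[OF wL] .
        define T where "T = bf d x (unitv 20)"
        have T: "T \<in> \<int>" unfolding T_def using xd[OF unitv_Lat] .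
        have Tx: "T = -2 * of_int d * x 20" unfolding T_def by (rule bf_e20)
        have xk: "x k \<in> \<int>" if "k < 20" for k
          using xd[OF fv_Lat, of k] bf_fv[OF that, of d x] bf_sym[of d x "fv k"] by simp
        have bxr: "bf d x r = of_int d * B - 2 * of_int d * of_int a * x 20"
          using by_ a_def B_def by simp
        show "(\<lambda>i. reflection d r x i + x i) \<in> Lat"
        proof (rule LatI)
          fix i :: nat
          consider "i < 20" | "i = 20" | "i \<ge> 21" by linarith
          then show "reflection d r x i + x i \<in> \<int>"
          proof cases
            case 1
            have wi: "w i \<in> \<int>" using Lat_Ints[OF wL] .
            have "reflection d r x i + x i = x i - (2 * (of_int d * B - 2 * of_int d * of_int a * x 20) / of_int (2 * d * sg)) * (of_int d * w i) + x i"
              unfolding reflection_def bxr N sg(1) using rw 1 by simp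
            also have "\<dots> = 2 * x i - of_int sg * (of_int d * B + of_int a * T) * w i"
              unfolding Tx using sg(2) d0 by (auto simp: field_simps)
            finally show ?thesis using xk[OF 1] B T wi by simp
          next
            case 2
            have aq: "of_int a ^ 2 = of_int d * of_int q - (of_int sg :: rat)"
            proof -
              have "a^2 = d * q - sg" using sgq by simp
              then have "(of_int (a^2) :: rat) = of_int (d * q - sg)" by (rule arg_cong)
              then show ?thesis by simp
            qed
            have "reflection d r x i + x i = x 20 - (2 * (of_int d * B - 2 * of_int d * of_int a * x 20) / of_int (2 * d * sg)) * of_int a + x 20"
              unfolding reflection_def bxr N sg(1) using ra 2 by simp
            also have "\<dots> = 2 * x 20 - of_int sg * B * of_int a + 2 * of_int sg * of_int a ^ 2 * x 20"
              using sg(2) d0 by (auto simp: field_simps power2_eq_square)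
            also have "\<dots> = - of_int sg * B * of_int a + 2 * of_int sg * of_int d * of_int q * x 20"
              using sg(2) unfolding aq by (auto simp: algebra_simps)
            also have "\<dots> = - of_int sg * B * of_int a - of_int sg * of_int q * T"
              unfolding Tx by (simp add: algebra_simps)
            finally show ?thesis using B T by simp
          next
            case 3 then show ?thesis using xQ Lat_zero[OF rL 3] unfolding reflection_def by simp
          qed
        next
          fix i :: nat assume "i \<ge> 21" then show "reflection d r x i + x i = 0"
            using xQ Lat_zero[OF rL] unfolding reflection_def by simp
        qed
      qed
      then show ?thesis ..
    qed
  qed
qed

end
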